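(* Let $p,q$ be odd primes with $q-p=2$, let $\varepsilon\in\{1,-1\}$, let $D=D_1\cdots D_n$ ($n\ge 0$) be a product of distinct odd primes with $\gcd(pq,D)=1$, and let $E_D/\mathbb{Q}$ be the elliptic curve $y^2=x(x+\varepsilon pD)(x+\varepsilon qD)$. Then $E_D$ has no anomalous primes, i.e. $\mathrm{Anom}(E_D/\mathbb{Q})=\emptyset$.
   Context: A prime $l$ is anomalous for an elliptic curve $E/\mathbb{Q}$ if $E$ has good reduction at $l$ and $\#\widetilde{E}_l(\mathbb{F}_l)\equiv 0\pmod l$, where $\widetilde{E}_l$ is the reduction of $E$ modulo $l$. $\mathrm{Anom}(E/\mathbb{Q})$ denotes the set of anomalous primes for $E$. *)

theory Defs
  imports Complex_Main "HOL-Computational_Algebra.Primes"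
begin

text \<open>A (long) Weierstrass model y^2 + a1 x y + a3 y = x^3 + a2 x^2 + a4 x + a6,
  given by its coefficients (a1, a2, a3, a4, a6).\<close>
datatype 'a wmodel = WM (a1: 'a) (a2: 'a) (a3: 'a) (a4: 'a) (a6: 'a)

definition wdisc :: "'a::comm_ring_1 wmodel \<Rightarrow> 'a" where
  "wdisc W = (let b2 = a1 W ^ 2 + 4 * a2 W;
                 b4 = 2 * a4 W + a1 W * a3 W;
                 b6 = a3 W ^ 2 + 4 * a6 W;
                 b8 = a1 W ^ 2 * a6 W + 4 * a2 W * a6 W - a1 W * a3 W * a4 W
                      + a2 W * a3 W ^ 2 - a4 W ^ 2
             in - (b2 ^ 2 * b8) - 8 * b4 ^ 3 - 27 * b6 ^ 2 + 9 * b2 * b4 * b6)"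

text \<open>Isomorphism over Q of Weierstrass models via an admissible change of variables
  x = u^2 x' + r, y = u^3 y' + s u^2 x' + t (u nonzero), transforming W into W'.\<close>
definition wiso :: "rat wmodel \<Rightarrow> rat wmodel \<Rightarrow> bool" where
  "wiso W W' \<longleftrightarrow> (\<exists>u r s t. u \<noteq> 0 \<and>
      u * a1 W' = a1 W + 2 * s \<and>
      u ^ 2 * a2 W' = a2 W - s * a1 W + 3 * r - s ^ 2 \<and>
      u ^ 3 * a3 W' = a3 W + r * a1 W + 2 * t \<and>
      u ^ 4 * a4 W' = a4 W - s * a3 W + 2 * r * a2 W - (t + r * s) * a1 W + 3 * r ^ 2 - 2 * s * t \<and>
      u ^ 6 * a6 W' = a6 W + r * a4 W + r ^ 2 * a2 W + r ^ 3 - t * a3 W - t ^ 2 - r * t * a1 W)"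

definition weq :: "int wmodel \<Rightarrow> int \<Rightarrow> int \<Rightarrow> int" where
  "weq W x y = y ^ 2 + a1 W * x * y + a3 W * y - x ^ 3 - a2 W * x ^ 2 - a4 W * x - a6 W"

text \<open>Number of F_l-points (including the point at infinity) of the reduction mod l
  of an integral model W.\<close>
definition npoints_mod :: "int wmodel \<Rightarrow> nat \<Rightarrow> nat" where
  "npoints_mod W l = card {(x, y). x < l \<and> y < l \<and> int l dvd weq W (int x) (int y)} + 1"

definition good_reduction :: "rat wmodel \<Rightarrow> nat \<Rightarrow> bool" where
  "good_reduction E l \<longleftrightarrow> (\<exists>W. wiso E (map_wmodel of_int W) \<and> \<not> int l dvd wdisc W)"

definition anomalous :: "rat wmodel \<Rightarrow> nat \<Rightarrow> bool" where
  "anomalous E l \<longleftrightarrow> prime l \<and> good_reduction E l \<and>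
     (\<exists>W. wiso E (map_wmodel of_int W) \<and> \<not> int l dvd wdisc W \<and> l dvd npoints_mod W l)"

definition Anom :: "rat wmodel \<Rightarrow> nat set" where
  "Anom E = {l. anomalous E l}"

text \<open>The curve y^2 = x(x+a)(x+b) = x^3 + (a+b)x^2 + ab x.\<close>
definition E_ab :: "rat \<Rightarrow> rat \<Rightarrow> rat wmodel" where
  "E_ab a b = WM 0 (a + b) 0 (a * b) 0"

end

theory Submission
  imports Defs "HOL-Number_Theory.Cong"
begin


lemma inv_parity:
  assumes "finite A" "\<forall>x\<in>A. \<sigma> x \<in> A \<and> \<sigma> (\<sigma> x) = x"
  shows "even (card A) \<longleftrightarrow> even (card {x\<in>A. \<sigma> x = x})"
  using assms
proof (induction "card A" arbitrary: A rule: less_induct)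
  case less
  show ?case
  proof (cases "\<exists>x\<in>A. \<sigma> x \<noteq> x")
    case True
    then obtain x where x: "x\<in>A" "\<sigma> x \<noteq> x" by blast
    let ?B = "A - {x, \<sigma> x}"
    have sub: "{x, \<sigma> x} \<subseteq> A" using x less.prems by auto
    have c2: "card {x, \<sigma> x} = 2" using x(2) by auto
    have cB: "card ?B = card A - 2" using card_Diff_subset[OF _ sub] c2 by simp
    have cA: "card A \<ge> 2" using card_mono[OF less.prems(1) sub] c2 by simp
    have lt: "card ?B < card A" using cB cA by simp
    have cl: "\<forall>y\<in>?B. \<sigma> y \<in> ?B \<and> \<sigma> (\<sigma> y) = y"
      using less.prems(2) x by (metis Diff_iff insert_iff singletonD)
    have IH: "even (card ?B) \<longleftrightarrow> even (card {y\<in>?B. \<sigma> y = y})"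
      using less.hyps[OF lt _ cl] less.prems(1) by simp
    have eqF: "{y\<in>?B. \<sigma> y = y} = {y\<in>A. \<sigma> y = y}"
      using x less.prems(2) by auto
    show ?thesis using IH eqF cB cA by (metis add_diff_inverse_nat even_add even_numeral not_less)
  next
    case False
    then have "{x\<in>A. \<sigma> x = x} = A" by auto
    then show ?thesis by simp
  qed
qed

lemma dvd_eqE: "(L::int) dvd a - b \<Longrightarrow> \<exists>k. a = b + k*L"
  by (metis add.commute diff_add_cancel dvd_def mult.commute)

lemma eq_dvdI: "\<exists>k. a = b + k*(L::int) \<Longrightarrow> L dvd a - b"
  by auto

lemma mod_eqI:
  fixes L a b :: int
  assumes "0 \<le> a" "a < L" "0 \<le> b" "b < L" "L dvd a - b"
  shows "a = b"
  using assms by (metis mod_pos_pos_trivial mod_eq_dvd_iff)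

lemma mod_dvd: "(L::int) dvd (t mod L) - t"
  by (simp flip: mod_eq_dvd_iff)

lemma dvd_sub_iff: "(L::int) dvd a - b \<Longrightarrow> L dvd a \<longleftrightarrow> L dvd b"
proof -
  assume "L dvd a - b"
  then obtain k where "a = b + L*k" by (metis dvd_def diff_add_cancel add.commute)
  then show ?thesis by (simp add: dvd_add_left_iff)
qed

lemma sq_cases:
  fixes L y z :: int
  assumes "prime L" "L dvd y^2 - z^2"
  shows "L dvd y - z \<or> L dvd y + z"
proof -
  have "y^2 - z^2 = (y - z) * (y + z)" by algebra
  then show ?thesis using assms prime_dvd_mult_iff by metis
qed

definition fib :: "int \<Rightarrow> int \<Rightarrow> int set" where
  "fib L v = {Y. 0 \<le> Y \<and> Y < L \<and> L dvd Y^2 - v}"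

lemma fib_fin: "finite (fib L v)"
  by (rule finite_subset[of _ "{0..<L}"]) (auto simp: fib_def)

lemma fib_zero:
  fixes L v :: int
  assumes "prime L" "L dvd v"
  shows "fib L v = {0}"
proof
  show "fib L v \<subseteq> {0}"
  proof
    fix Y assume Y: "Y \<in> fib L v"
    then have "L dvd Y^2" using assms(2) unfolding fib_def
      by (metis (mono_tags, lifting) diff_add_cancel dvd_add mem_Collect_eq)
    then have "L dvd Y" using assms(1) prime_dvd_power by blast
    then show "Y \<in> {0}" using Y mod_eqI[of Y L 0] prime_gt_0_int[OF assms(1)] unfolding fib_def by auto
  qed
  show "{0} \<subseteq> fib L v" using assms prime_gt_0_int[OF assms(1)] by (auto simp: fib_def)
qed

lemma fib_two:
  fixes L v y0 :: int
  assumes "prime L" "odd L" "\<not> L dvd v" "y0 \<in> fib L v"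
  shows "fib L v = {y0, L - y0} \<and> y0 \<noteq> L - y0"
proof -
  have L0: "L > 0" using prime_gt_0_int[OF assms(1)] .
  have y: "0 \<le> y0" "y0 < L" "L dvd y0^2 - v" using assms(4) by (auto simp: fib_def)
  have ny: "\<not> L dvd y0"
  proof
    assume "L dvd y0"
    then have "L dvd y0^2" by (simp add: power2_eq_square)
    then show False using y(3) assms(3) dvd_sub_iff by blast
  qed
  have y0p: "0 < y0" using y ny by (metis dvd_0_right order_le_less)
  have ne: "y0 \<noteq> L - y0"
  proof
    assume "y0 = L - y0"
    then have "L = 2 * y0" by simp
    then show False using assms(2) by simp
  qed
  have m: "L - y0 \<in> fib L v"
  proof -
    have "\<exists>k. (L - y0)^2 = v + k * L"
    proof -
      obtain k where k: "y0^2 = v + k*L" using dvd_eqE[OF y(3)] by blast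
      show ?thesis using k by algebra
    qed
    then show ?thesis using y y0p by (auto simp: fib_def intro!: eq_dvdI)
  qed
  have sub: "fib L v \<subseteq> {y0, L - y0}"
  proof
    fix Y assume Y: "Y \<in> fib L v"
    then have Yb: "0 \<le> Y" "Y < L" "L dvd Y^2 - v" by (auto simp: fib_def)
    have "L dvd Y^2 - y0^2"
    proof -
      have "Y^2 - y0^2 = (Y^2 - v) - (y0^2 - v)" by simp
      then show ?thesis using Yb(3) y(3) by (metis dvd_diff)
    qed
    then have "L dvd Y - y0 \<or> L dvd Y + y0" using sq_cases assms(1) by blast
    then show "Y \<in> {y0, L - y0}"
    proof
      assume "L dvd Y - y0"
      then show ?thesis using mod_eqI[of Y L y0] Yb y by auto
    next
      assume h: "L dvd Y + y0"
      have "Y - (L - y0) = (Y + y0) - L" by simp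
      then have "L dvd Y - (L - y0)" using h by (metis dvd_diff dvd_refl)
      then show ?thesis using mod_eqI[of Y L "L - y0"] Yb y y0p by auto
    qed
  qed
  show ?thesis using sub m assms(4) ne by auto
qed

lemma fib_card_le:
  fixes L v :: int
  assumes "prime L" "odd L"
  shows "card (fib L v) \<le> 2"
proof (cases "L dvd v")
  case True then show ?thesis using fib_zero[OF assms(1)] by simp
next
  case False
  show ?thesis
  proof (cases "fib L v = {}")
    case True then show ?thesis by simp
  next
    case False
    then obtain y0 where "y0 \<in> fib L v" by blast
    then have "fib L v = {y0, L - y0}" using fib_two assms \<open>\<not> L dvd v\<close> by blast
    then show ?thesis by (simp add: card_insert_if)
  qed
qed



lemma dtrans: "(L::int) dvd a - b \<Longrightarrow> L dvd b - c \<Longrightarrow> L dvd a - c"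
  by (metis diff_add_cancel add_diff_eq dvd_add diff_diff_eq2 add.commute diff_add_eq)

definition winv :: "int \<Rightarrow> int \<Rightarrow> int" where
  "winv L X = (SOME w. L dvd X * w - 1)"

lemma winv:
  fixes L X :: int
  assumes "prime L" "\<not> L dvd X"
  shows "L dvd X * winv L X - 1"
proof -
  have "coprime X L" using prime_imp_coprime_int[OF assms] by (simp add: coprime_commute)
  then obtain w where "[X * w = 1] (mod L)" using cong_solve_coprime_int by blast
  then have "L dvd X * w - 1" by (simp add: cong_iff_dvd_diff)
  then show ?thesis unfolding winv_def by (rule someI)
qed

lemma winv_nd:
  fixes L X :: int
  assumes "prime L" "\<not> L dvd X"
  shows "\<not> L dvd winv L X"
proof
  assume "L dvd winv L X"
  then have "L dvd X * winv L X" by simp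
  then have "L dvd 1" using winv[OF assms] dvd_sub_iff by blast
  then show False using assms(1) by (simp add: prime_int_iff)
qed

lemma pdvd3: "prime (L::int) \<Longrightarrow> L dvd a*b*c \<longleftrightarrow> L dvd a \<or> L dvd b \<or> L dvd c"
  by (simp add: prime_dvd_mult_iff)

definition gg :: "int \<Rightarrow> int \<Rightarrow> int \<Rightarrow> int" where
  "gg \<alpha> \<beta> X = X*(X-\<alpha>)*(X-\<beta>)"

definition AA :: "int \<Rightarrow> int \<Rightarrow> int \<Rightarrow> int set" where
  "AA L \<alpha> \<beta> = {X. 0 \<le> X \<and> X < L \<and> \<not> L dvd gg \<alpha> \<beta> X \<and> fib L (gg \<alpha> \<beta> X) \<noteq> {}}"

definition sig :: "int \<Rightarrow> int \<Rightarrow> int \<Rightarrow> int \<Rightarrow> int" where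
  "sig L \<alpha> \<beta> X = (\<alpha>*\<beta>*winv L X) mod L"

lemma AA_nd:
  assumes "X \<in> AA L \<alpha> \<beta>" shows "\<not> L dvd X"
  using assms unfolding AA_def gg_def by auto

lemma sig_A:
  fixes L \<alpha> \<beta> X :: int
  assumes L: "prime L" and a: "\<not> L dvd \<alpha>" and b: "\<not> L dvd \<beta>"
    and X: "X \<in> AA L \<alpha> \<beta>"
  shows "sig L \<alpha> \<beta> X \<in> AA L \<alpha> \<beta>"
proof -
  have L0: "L > 0" using prime_gt_0_int[OF L] .
  have nX: "\<not> L dvd X" using AA_nd[OF X] .
  define w where "w = winv L X"
  have hw: "L dvd X * w - 1" using winv[OF L nX] unfolding w_def .
  have nw: "\<not> L dvd w" using winv_nd[OF L nX] unfolding w_def .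
  obtain Y where Y: "Y \<in> fib L (gg \<alpha> \<beta> X)" using X unfolding AA_def by auto
  have nY: "\<not> L dvd Y"
  proof
    assume "L dvd Y"
    then have "L dvd Y^2" by (simp add: power2_eq_square)
    then show False using Y X dvd_sub_iff unfolding fib_def AA_def by blast
  qed
  define S where "S = sig L \<alpha> \<beta> X"
  define Y' where "Y' = (\<alpha>*\<beta>*Y*w*w) mod L"
  have S1: "L dvd S - \<alpha>*\<beta>*w" unfolding S_def sig_def w_def by (rule mod_dvd)
  have Y1: "L dvd Y' - \<alpha>*\<beta>*Y*w*w" unfolding Y'_def by (rule mod_dvd)
  obtain k1 where k1: "X * w = 1 + k1 * L" using dvd_eqE[OF hw] by auto
  obtain k2 where k2: "Y^2 = X*(X-\<alpha>)*(X-\<beta>) + k2 * L" using dvd_eqE Y unfolding fib_def gg_def by blast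
  obtain k3 where k3: "S = \<alpha>*\<beta>*w + k3 * L" using dvd_eqE[OF S1] by auto
  obtain k4 where k4: "Y' = \<alpha>*\<beta>*Y*w*w + k4 * L" using dvd_eqE[OF Y1] by auto
  have "\<exists>m. Y'^2 = S*(S-\<alpha>)*(S-\<beta>) + m * L" using k1 k2 k3 k4 by algebra
  then have d: "L dvd Y'^2 - gg \<alpha> \<beta> S" unfolding gg_def by (rule eq_dvdI)
  have nY': "\<not> L dvd Y'"
  proof
    assume "L dvd Y'"
    then have "L dvd \<alpha>*\<beta>*Y*w*w" using Y1 dvd_sub_iff by blast
    then show False using L a b nY nw by (simp add: prime_dvd_mult_iff)
  qed
  have ng: "\<not> L dvd gg \<alpha> \<beta> S"
  proof
    assume "L dvd gg \<alpha> \<beta> S"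
    then have "L dvd Y'^2" using d dvd_sub_iff by blast
    then show False using nY' L prime_dvd_power by blast
  qed
  have Sb: "0 \<le> S" "S < L" unfolding S_def sig_def using L0 by auto
  have Yb: "0 \<le> Y'" "Y' < L" unfolding Y'_def using L0 by auto
  have "Y' \<in> fib L (gg \<alpha> \<beta> S)" using d Yb unfolding fib_def by auto
  then show ?thesis using Sb ng unfolding AA_def S_def by auto
qed

lemma sig_inv:
  fixes L \<alpha> \<beta> X :: int
  assumes L: "prime L" and a: "\<not> L dvd \<alpha>" and b: "\<not> L dvd \<beta>"
    and X: "X \<in> AA L \<alpha> \<beta>"
  shows "sig L \<alpha> \<beta> (sig L \<alpha> \<beta> X) = X"
proof -
  have L0: "L > 0" using prime_gt_0_int[OF L] .
  define S where "S = sig L \<alpha> \<beta> X"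
  have SA: "S \<in> AA L \<alpha> \<beta>" using sig_A[OF L a b X] unfolding S_def .
  have nX: "\<not> L dvd X" using AA_nd[OF X] .
  have nS: "\<not> L dvd S" using AA_nd[OF SA] .
  obtain k1 where k1: "X * winv L X = 1 + k1 * L" using dvd_eqE[OF winv[OF L nX]] by auto
  obtain k2 where k2: "S * winv L S = 1 + k2 * L" using dvd_eqE[OF winv[OF L nS]] by auto
  obtain k3 where k3: "S = \<alpha>*\<beta>*winv L X + k3 * L"
    using dvd_eqE[OF mod_dvd[of L "\<alpha>*\<beta>*winv L X"]] unfolding S_def sig_def by auto
  obtain k4 where k4: "sig L \<alpha> \<beta> S = \<alpha>*\<beta>*winv L S + k4 * L"
    using dvd_eqE[OF mod_dvd[of L "\<alpha>*\<beta>*winv L S"]] unfolding sig_def by auto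
  have "\<exists>m. sig L \<alpha> \<beta> S = X + m * L" using k1 k2 k3 k4 by algebra
  then have d: "L dvd sig L \<alpha> \<beta> S - X" by (rule eq_dvdI)
  have "0 \<le> sig L \<alpha> \<beta> S" "sig L \<alpha> \<beta> S < L" unfolding sig_def using L0 by auto
  then show ?thesis using mod_eqI[OF _ _ _ _ d] X unfolding AA_def S_def by auto
qed

lemma fix_sq:
  fixes L \<alpha> \<beta> X :: int
  assumes L: "prime L" and X: "X \<in> AA L \<alpha> \<beta>" and f: "sig L \<alpha> \<beta> X = X"
  shows "L dvd X^2 - \<alpha>*\<beta>"
proof -
  have nX: "\<not> L dvd X" using AA_nd[OF X] .
  obtain k1 where k1: "X * winv L X = 1 + k1 * L" using dvd_eqE[OF winv[OF L nX]] by auto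
  obtain k3 where k3: "X = \<alpha>*\<beta>*winv L X + k3 * L"
    using dvd_eqE[OF mod_dvd[of L "\<alpha>*\<beta>*winv L X"]] f unfolding sig_def by auto
  have "\<exists>m. X^2 = \<alpha>*\<beta> + m * L" using k1 k3 by algebra
  then show ?thesis by (rule eq_dvdI)
qed

lemma fix_even:
  fixes L \<alpha> \<beta> :: int
  assumes L: "prime L" and oL: "odd L" and a: "\<not> L dvd \<alpha>" and b: "\<not> L dvd \<beta>"
    and ab: "\<not> L dvd \<alpha> - \<beta>"
  shows "even (card {X \<in> AA L \<alpha> \<beta>. sig L \<alpha> \<beta> X = X})"
proof (cases "{X \<in> AA L \<alpha> \<beta>. sig L \<alpha> \<beta> X = X} = {}")
  case True then show ?thesis by (metis card.empty even_zero)
next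
  case False
  have L0: "L > 0" using prime_gt_0_int[OF L] .
  then obtain s where s: "s \<in> AA L \<alpha> \<beta>" "sig L \<alpha> \<beta> s = s" using False by auto
  have ns: "\<not> L dvd s" using AA_nd[OF s(1)] .
  have sb: "0 \<le> s" "s < L" using s(1) unfolding AA_def by auto
  have sp: "0 < s" using sb ns by (metis dvd_0_right order_le_less)
  have ss: "L dvd s^2 - \<alpha>*\<beta>" using fix_sq[OF L s] .
  define t where "t = L - s"
  have tb: "0 \<le> t" "t < L" using sb sp unfolding t_def by auto
  have nt: "\<not> L dvd t"
  proof
    assume "L dvd t"
    then have "L dvd L - t" using dvd_diff[OF dvd_refl[of L]] by blast
    then show False using ns unfolding t_def by simp
  qed
  have ne: "s \<noteq> t" unfolding t_def using oL by auto
  obtain Y where Y: "Y \<in> fib L (gg \<alpha> \<beta> s)" using s(1) unfolding AA_def by auto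
  have nY: "\<not> L dvd Y"
  proof
    assume "L dvd Y"
    then have "L dvd Y^2" by (simp add: power2_eq_square)
    then show False using Y s(1) dvd_sub_iff unfolding fib_def AA_def by blast
  qed
  define Y2 where "Y2 = (s*s*(\<alpha>-\<beta>)*winv L Y) mod L"
  have Y21: "L dvd Y2 - s*s*(\<alpha>-\<beta>)*winv L Y" unfolding Y2_def by (rule mod_dvd)
  obtain k1 where k1: "s^2 = \<alpha>*\<beta> + k1 * L" using dvd_eqE[OF ss] by auto
  obtain k2 where k2: "Y^2 = s*(s-\<alpha>)*(s-\<beta>) + k2 * L" using dvd_eqE Y unfolding fib_def gg_def by blast
  obtain k3 where k3: "Y * winv L Y = 1 + k3 * L" using dvd_eqE[OF winv[OF L nY]] by auto
  obtain k4 where k4: "Y2 = s*s*(\<alpha>-\<beta>)*winv L Y + k4 * L" using dvd_eqE[OF Y21] by auto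
  define G where "G = -(s*(s+\<alpha>)*(s+\<beta>))"
  define wy where "wy = winv L Y"
  have qsa: "L dvd Y2^2 - s^4*(\<alpha>-\<beta>)^2*wy^2"
  proof (rule eq_dvdI, rule exI)
    show "Y2^2 = s^4*(\<alpha>-\<beta>)^2*wy^2 + (k4*(2*s*s*(\<alpha>-\<beta>)*wy + k4*L))*L"
      using k4 unfolding wy_def by algebra
  qed
  have qsb: "L dvd s^4*(\<alpha>-\<beta>)^2*wy^2 - G*(s*(s-\<alpha>)*(s-\<beta>))*wy^2"
  proof (rule eq_dvdI, rule exI)
    show "s^4*(\<alpha>-\<beta>)^2*wy^2 = G*(s*(s-\<alpha>)*(s-\<beta>))*wy^2 + (s^2*k1^2*L*wy^2)*L"
      unfolding G_def using k1 by algebra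
  qed
  have qsc: "L dvd G*(s*(s-\<alpha>)*(s-\<beta>))*wy^2 - G*Y^2*wy^2"
  proof (rule eq_dvdI, rule exI)
    show "G*(s*(s-\<alpha>)*(s-\<beta>))*wy^2 = G*Y^2*wy^2 + (-G*k2*wy^2)*L"
      using k2 by algebra
  qed
  have qsd: "L dvd G*Y^2*wy^2 - G"
  proof (rule eq_dvdI, rule exI)
    show "G*Y^2*wy^2 = G + (G*(2*k3 + k3^2*L))*L" using k3 unfolding wy_def by algebra
  qed
  have qse: "L dvd G - gg \<alpha> \<beta> t"
  proof (rule eq_dvdI, rule exI)
    show "G = gg \<alpha> \<beta> t + (-(L^2 + L*(-3*s-\<alpha>-\<beta>) + 3*s^2 + 2*s*(\<alpha>+\<beta>) + \<alpha>*\<beta>))*L"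
      unfolding G_def gg_def t_def by algebra
  qed
  have d: "L dvd Y2^2 - gg \<alpha> \<beta> t"
    using dtrans[OF dtrans[OF dtrans[OF dtrans[OF qsa qsb] qsc] qsd] qse] .
  have nY2: "\<not> L dvd Y2"
  proof
    assume "L dvd Y2"
    then have "L dvd s*s*(\<alpha>-\<beta>)*winv L Y" using Y21 dvd_sub_iff by blast
    then show False using L ns ab winv_nd[OF L nY] by (simp add: prime_dvd_mult_iff)
  qed
  have ng: "\<not> L dvd gg \<alpha> \<beta> t"
  proof
    assume "L dvd gg \<alpha> \<beta> t"
    then have "L dvd Y2^2" using d dvd_sub_iff by blast
    then show False using nY2 L prime_dvd_power by blast
  qed
  have Y2b: "0 \<le> Y2" "Y2 < L" unfolding Y2_def using L0 by auto
  have tA: "t \<in> AA L \<alpha> \<beta>" using d Y2b tb ng unfolding AA_def fib_def by auto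
  have tf: "sig L \<alpha> \<beta> t = t"
  proof -
    obtain k5 where k5: "t * winv L t = 1 + k5 * L" using dvd_eqE[OF winv[OF L nt]] by auto
    obtain k6 where k6: "sig L \<alpha> \<beta> t = \<alpha>*\<beta>*winv L t + k6 * L"
      using dvd_eqE[OF mod_dvd[of L "\<alpha>*\<beta>*winv L t"]] unfolding sig_def by auto
    have "sig L \<alpha> \<beta> t = (L - s) + (k6 + (L-s)*k5 - (L-2*s)*winv L t - k1*winv L t) * L"
      using k1 k5 k6 unfolding t_def by algebra
    then have "\<exists>m. sig L \<alpha> \<beta> t = (L - s) + m * L" by blast
    then have dd: "L dvd sig L \<alpha> \<beta> t - t" unfolding t_def by (rule eq_dvdI)
    have "0 \<le> sig L \<alpha> \<beta> t" "sig L \<alpha> \<beta> t < L" unfolding sig_def using L0 by auto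
    then show ?thesis using mod_eqI[OF _ _ tb dd] by auto
  qed
  have eq: "{X \<in> AA L \<alpha> \<beta>. sig L \<alpha> \<beta> X = X} = {s, t}"
  proof
    show "{s, t} \<subseteq> {X \<in> AA L \<alpha> \<beta>. sig L \<alpha> \<beta> X = X}" using s tA tf by auto
    show "{X \<in> AA L \<alpha> \<beta>. sig L \<alpha> \<beta> X = X} \<subseteq> {s, t}"
    proof
      fix X assume X: "X \<in> {X \<in> AA L \<alpha> \<beta>. sig L \<alpha> \<beta> X = X}"
      then have Xs: "L dvd X^2 - \<alpha>*\<beta>" using fix_sq[OF L] by auto
      have Xb: "0 \<le> X" "X < L" using X unfolding AA_def by auto
      have "X^2 - s^2 = (X^2 - \<alpha>*\<beta>) - (s^2 - \<alpha>*\<beta>)" by simp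
      then have "L dvd X^2 - s^2" using dvd_diff[OF Xs ss] by metis
      then have "L dvd X - s \<or> L dvd X + s" using sq_cases L by blast
      then show "X \<in> {s, t}"
      proof
        assume "L dvd X - s"
        then show ?thesis using mod_eqI[OF Xb sb] by auto
      next
        assume h: "L dvd X + s"
        have e: "X - t = (X + s) - L" unfolding t_def by simp
        have "L dvd (X + s) - L" using dvd_diff[OF h dvd_refl[of L]] .
        then have "L dvd X - t" unfolding e .
        then show ?thesis using mod_eqI[OF Xb tb] by auto
      qed
    qed
  qed
  show ?thesis using eq ne by simp
qed

lemma AA_even:
  fixes L \<alpha> \<beta> :: int
  assumes L: "prime L" and oL: "odd L" and a: "\<not> L dvd \<alpha>" and b: "\<not> L dvd \<beta>"
    and ab: "\<not> L dvd \<alpha> - \<beta>"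
  shows "even (card (AA L \<alpha> \<beta>))"
proof -
  have fin: "finite (AA L \<alpha> \<beta>)"
    by (rule finite_subset[of _ "{0..<L}"]) (auto simp: AA_def)
  show ?thesis
    using inv_parity[OF fin, of "sig L \<alpha> \<beta>"] sig_A[OF L a b] sig_inv[OF L a b] fix_even[OF assms]
    by blast
qed

lemma Z_card:
  fixes L \<alpha> \<beta> :: int
  assumes L: "prime L" and a: "\<not> L dvd \<alpha>" and b: "\<not> L dvd \<beta>"
    and ab: "\<not> L dvd \<alpha> - \<beta>"
  shows "card {X \<in> {0..<L}. L dvd gg \<alpha> \<beta> X} = 3"
proof -
  have L0: "L > 0" using prime_gt_0_int[OF L] .
  have eq: "{X \<in> {0..<L}. L dvd gg \<alpha> \<beta> X} = {0, \<alpha> mod L, \<beta> mod L}"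
  proof
    show "{X \<in> {0..<L}. L dvd gg \<alpha> \<beta> X} \<subseteq> {0, \<alpha> mod L, \<beta> mod L}"
    proof
      fix X assume X: "X \<in> {X \<in> {0..<L}. L dvd gg \<alpha> \<beta> X}"
      then have Xb: "0 \<le> X" "X < L" by auto
      have "L dvd X \<or> L dvd X - \<alpha> \<or> L dvd X - \<beta>" using X pdvd3[OF L] unfolding gg_def by auto
      moreover have "L dvd X \<Longrightarrow> X = 0" using mod_eqI[OF Xb, of 0] L0 by auto
      moreover have "L dvd X - \<alpha> \<Longrightarrow> X = \<alpha> mod L"
        using mod_eqI[OF Xb, of "\<alpha> mod L"] L0 by (simp add: mod_eq_dvd_iff[symmetric])
      moreover have "L dvd X - \<beta> \<Longrightarrow> X = \<beta> mod L"
        using mod_eqI[OF Xb, of "\<beta> mod L"] L0 by (simp add: mod_eq_dvd_iff[symmetric])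
      ultimately show "X \<in> {0, \<alpha> mod L, \<beta> mod L}" by auto
    qed
    have "L dvd gg \<alpha> \<beta> (\<alpha> mod L)"
      using mod_dvd[of L \<alpha>] unfolding gg_def by (simp add: dvd_mult)
    moreover have "L dvd gg \<alpha> \<beta> (\<beta> mod L)"
      using mod_dvd[of L \<beta>] unfolding gg_def by (simp add: dvd_mult)
    moreover have "L dvd gg \<alpha> \<beta> 0" unfolding gg_def by simp
    ultimately show "{0, \<alpha> mod L, \<beta> mod L} \<subseteq> {X \<in> {0..<L}. L dvd gg \<alpha> \<beta> X}"
      using L0 by auto
  qed
  have d1: "0 \<noteq> \<alpha> mod L" using a by (simp add: dvd_eq_mod_eq_0)
  have d2: "0 \<noteq> \<beta> mod L" using b by (simp add: dvd_eq_mod_eq_0)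
  have d3: "\<alpha> mod L \<noteq> \<beta> mod L" using ab by (simp add: mod_eq_dvd_iff)
  show ?thesis using eq d1 d2 d3 by simp
qed

lemma count_main:
  fixes L \<alpha> \<beta> :: int
  assumes L: "prime L" and oL: "odd L" and a: "\<not> L dvd \<alpha>" and b: "\<not> L dvd \<beta>"
    and ab: "\<not> L dvd \<alpha> - \<beta>"
  shows "card {(X,Y). 0 \<le> X \<and> X < L \<and> 0 \<le> Y \<and> Y < L \<and> L dvd Y^2 - gg \<alpha> \<beta> X} mod 4 = 3
    \<and> int (card {(X,Y). 0 \<le> X \<and> X < L \<and> 0 \<le> Y \<and> Y < L \<and> L dvd Y^2 - gg \<alpha> \<beta> X}) \<le> 2 * L"
proof -
  have L0: "L > 0" using prime_gt_0_int[OF L] .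
  let ?F = "{0..<L}"
  let ?Z = "{X \<in> ?F. L dvd gg \<alpha> \<beta> X}"
  let ?A = "AA L \<alpha> \<beta>"
  have eqS: "{(X,Y). 0 \<le> X \<and> X < L \<and> 0 \<le> Y \<and> Y < L \<and> L dvd Y^2 - gg \<alpha> \<beta> X}
      = Sigma ?F (\<lambda>X. fib L (gg \<alpha> \<beta> X))" by (auto simp: fib_def)
  have c1: "card (Sigma ?F (\<lambda>X. fib L (gg \<alpha> \<beta> X))) = (\<Sum>X\<in>?F. card (fib L (gg \<alpha> \<beta> X)))"
    by (rule card_SigmaI) (auto simp: fib_fin)
  have pt: "card (fib L (gg \<alpha> \<beta> X)) = (if X \<in> ?Z then 1 else 0) + (if X \<in> ?A then 2 else 0)"
    if X: "X \<in> ?F" for X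
  proof (cases "L dvd gg \<alpha> \<beta> X")
    case True
    then show ?thesis using fib_zero[OF L True] X unfolding AA_def by auto
  next
    case False
    show ?thesis
    proof (cases "fib L (gg \<alpha> \<beta> X) = {}")
      case True
      then show ?thesis using False X unfolding AA_def by auto
    next
      case ne: False
      then obtain y0 where "y0 \<in> fib L (gg \<alpha> \<beta> X)" by blast
      then have "fib L (gg \<alpha> \<beta> X) = {y0, L - y0} \<and> y0 \<noteq> L - y0" using fib_two[OF L oL False] by blast
      then show ?thesis using False X ne unfolding AA_def by auto
    qed
  qed
  have s1: "(\<Sum>X\<in>?F. (if X \<in> ?Z then 1 else 0::nat)) = card ?Z"
  proof -
    have ZF: "{X \<in> ?F. X \<in> ?Z} = ?Z" by blast
    show ?thesis using sum.inter_filter[of ?F "\<lambda>_. 1::nat" "\<lambda>X. X \<in> ?Z", symmetric]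
      unfolding ZF by simp
  qed
  have AF: "{X \<in> ?F. X \<in> ?A} = ?A" unfolding AA_def by auto
  have s2: "(\<Sum>X\<in>?F. (if X \<in> ?A then 2 else 0::nat)) = 2 * card ?A"
    using sum.inter_filter[of ?F "\<lambda>_. 2::nat" "\<lambda>X. X \<in> ?A", symmetric] AF by simp
  have tot: "(\<Sum>X\<in>?F. card (fib L (gg \<alpha> \<beta> X))) = card ?Z + 2 * card ?A"
    using sum.cong[OF refl pt, of ?F] s1 s2 by (simp add: sum.distrib)
  have Z3: "card ?Z = 3" using Z_card[OF L a b ab] .
  have Ae: "even (card ?A)" using AA_even[OF assms] .
  have m: "(3 + 2 * card ?A) mod 4 = 3" using Ae by (auto elim!: evenE)
  have le: "(\<Sum>X\<in>?F. card (fib L (gg \<alpha> \<beta> X))) \<le> card ?F * 2"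
    using sum_bounded_above[of ?F "\<lambda>X. card (fib L (gg \<alpha> \<beta> X))" 2] fib_card_le[OF L oL] by simp
  have cF: "card ?F = nat L" by simp
  show ?thesis using eqS c1 tot Z3 m le cF L0 by simp
qed



lemma rat_root_int:
  fixes x :: rat and a b c :: int
  assumes h: "x^3 + of_int a * x^2 + of_int b * x + of_int c = 0"
  shows "\<exists>n. x = of_int n"
proof -
  obtain n d where q: "quotient_of x = (n,d)" by (cases "quotient_of x")
  have x: "x = of_int n / of_int d" using quotient_of_div[OF q] .
  have d0: "d > 0" using quotient_of_denom_pos[OF q] .
  have cp: "coprime n d" using quotient_of_coprime[OF q] .
  have "rat_of_int (n^3 + a*n^2*d + b*n*d^2 + c*d^3) = of_int (d^3) * (x^3 + of_int a * x^2 + of_int b * x + of_int c)"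
    using d0 unfolding x by (simp add: field_simps power3_eq_cube power2_eq_square)
  then have "rat_of_int (n^3 + a*n^2*d + b*n*d^2 + c*d^3) = 0" using h by simp
  then have "n^3 + a*n^2*d + b*n*d^2 + c*d^3 = 0" by (simp only: of_int_eq_0_iff)
  then have "n^3 = d * (- (a*n^2 + b*n*d + c*d^2))" by (simp add: algebra_simps power2_eq_square power3_eq_cube)
  then have "d dvd n^3" by simp
  moreover have "coprime d (n^3)" using cp by (simp add: coprime_commute)
  ultimately have "is_unit d" using coprime_absorb_left by (metis coprime_common_divisor dvd_refl)
  then have "d = 1" using d0 by simp
  then show ?thesis using x by auto
qed

lemma wiso_extract:
  fixes A B :: int and W :: "int wmodel"
  assumes "wiso (E_ab (of_int A) (of_int B)) (map_wmodel of_int W)"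
  shows "\<exists>F1 F2 F3 :: int. a1 W^2 + 4*a2 W = -(F1+F2+F3) \<and>
     8*(2*a4 W + a1 W*a3 W) = F1*F2+F1*F3+F2*F3 \<and>
     16*(a3 W^2 + 4*a6 W) = -(F1*F2*F3) \<and> (F1 - F2)*B = (F1 - F3)*A"
proof -
  obtain w1 w2 w3 w4 w6 where W: "W = WM w1 w2 w3 w4 w6" by (cases W)
  obtain u r s t :: rat where u: "u \<noteq> 0"
    and h1: "u * of_int w1 = 2 * s"
    and h2: "u^2 * of_int w2 = (of_int A + of_int B) + 3 * r - s^2"
    and h3: "u^3 * of_int w3 = 2 * t"
    and h4: "u^4 * of_int w4 = of_int A * of_int B + 2 * r * (of_int A + of_int B) + 3 * r^2 - 2 * s * t"
    and h6: "u^6 * of_int w6 = r * (of_int A * of_int B) + r^2 * (of_int A + of_int B) + r^3 - t^2"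
    using assms unfolding wiso_def E_ab_def W by auto
  define v where "v = 1 / u"
  have uv: "u * v = 1" using u unfolding v_def by simp
  define f1 where "f1 = -4 * r * v^2"
  define f2 where "f2 = -4 * (of_int A + r) * v^2"
  define f3 where "f3 = -4 * (of_int B + r) * v^2"
  have V1: "rat_of_int w1^2 + 4 * of_int w2 = -(f1+f2+f3)"
    unfolding f1_def f2_def f3_def using uv h1 h2 by algebra
  have V2: "8 * (2 * rat_of_int w4 + of_int w1 * of_int w3) = f1*f2+f1*f3+f2*f3"
    unfolding f1_def f2_def f3_def using uv h1 h3 h4 by algebra
  have V3: "16 * (rat_of_int w3^2 + 4 * of_int w6) = -(f1*f2*f3)"
    unfolding f1_def f2_def f3_def using uv h3 h6 by algebra
  have V4: "(f1 - f2) * of_int B = (f1 - f3) * of_int A"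
    unfolding f1_def f2_def f3_def by algebra
  have root: "f^3 + of_int (w1^2 + 4*w2) * f^2 + of_int (8*(2*w4 + w1*w3)) * f
       + of_int (16*(w3^2+4*w6)) = 0" if "f = f1 \<or> f = f2 \<or> f = f3" for f
  proof -
    have "f^3 + of_int (w1^2 + 4*w2) * f^2 + of_int (8*(2*w4 + w1*w3)) * f
       + of_int (16*(w3^2+4*w6)) = (f - f1) * (f - f2) * (f - f3)"
    proof -
      have e: "f^3 + (-(f1+f2+f3))*f^2 + (f1*f2+f1*f3+f2*f3)*f + (-(f1*f2*f3)) = (f-f1)*(f-f2)*(f-f3)"
        by (simp add: algebra_simps power2_eq_square power3_eq_cube)
      show ?thesis unfolding of_int_add of_int_mult of_int_power of_int_numeral V1 V2 V3 [symmetric] e[symmetric]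
        using V1 V2 V3 by simp
    qed
    then show ?thesis using that by auto
  qed
  obtain F1 where F1: "f1 = of_int F1" using rat_root_int[OF root] by blast
  obtain F2 where F2: "f2 = of_int F2" using rat_root_int[OF root] by blast
  obtain F3 where F3: "f3 = of_int F3" using rat_root_int[OF root] by blast
  have "rat_of_int (w1^2 + 4*w2) = of_int (-(F1+F2+F3))" using V1 F1 F2 F3 by simp
  moreover have "rat_of_int (8*(2*w4 + w1*w3)) = of_int (F1*F2+F1*F3+F2*F3)" using V2 F1 F2 F3 by simp
  moreover have "rat_of_int (16*(w3^2 + 4*w6)) = of_int (-(F1*F2*F3))" using V3 F1 F2 F3 by simp
  moreover have "rat_of_int ((F1 - F2)*B) = of_int ((F1 - F3)*A)" using V4 F1 F2 F3 by simp
  ultimately show ?thesis unfolding W of_int_eq_iff by auto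
qed



lemma disc_id:
  fixes W :: "int wmodel" and F1 F2 F3 :: int
  assumes V1: "a1 W^2 + 4*a2 W = -(F1+F2+F3)"
    and V2: "8*(2*a4 W + a1 W*a3 W) = F1*F2+F1*F3+F2*F3"
    and V3: "16*(a3 W^2 + 4*a6 W) = -(F1*F2*F3)"
  shows "256 * wdisc W = ((F1-F2)*(F1-F3)*(F2-F3))^2"
  using V1 V2 V3 unfolding wdisc_def Let_def by algebra



lemma dvd64:
  fixes L z :: int
  assumes L: "prime L" "odd L"
  shows "L dvd 64 * z \<longleftrightarrow> L dvd z"
proof -
  have "\<not> L dvd 64"
  proof
    assume "L dvd 64"
    then have "L dvd 2^6" by simp
    then have "L dvd 2" using L(1) prime_dvd_power by blast
    then have "L \<le> 2" by (simp add: zdvd_imp_le)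
    moreover have "L \<ge> 2" using L(1) prime_ge_2_int by blast
    ultimately have "L = 2" by simp
    then show False using L(2) by simp
  qed
  then show ?thesis using L(1) prime_dvd_mult_iff by auto
qed

lemma count_W:
  fixes l :: nat and W :: "int wmodel" and F1 F2 F3 :: int
  assumes L: "prime (int l)" "odd (int l)"
    and hw: "\<And>x y. 64 * weq W x y = (8*y + 4*a1 W*x + 4*a3 W)^2 - (4*x - F1)*(4*x-F2)*(4*x-F3)"
    and a: "\<not> int l dvd F2 - F1" and b: "\<not> int l dvd F3 - F1"
    and ab: "\<not> int l dvd (F2 - F1) - (F3 - F1)"
  shows "card {(x,y). x < l \<and> y < l \<and> int l dvd weq W (int x) (int y)} mod 4 = 3
       \<and> card {(x,y). x < l \<and> y < l \<and> int l dvd weq W (int x) (int y)} \<le> 2*l"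
proof -
  define L where "L = int l"
  have Lp: "prime L" "odd L" using L unfolding L_def by auto
  have L0: "L > 0" using prime_gt_0_int[OF Lp(1)] .
  define \<alpha> where "\<alpha> = F2 - F1"
  define \<beta> where "\<beta> = F3 - F1"
  define C0 where "C0 = {(X,Y). 0 \<le> X \<and> X < L \<and> 0 \<le> Y \<and> Y < L \<and> L dvd Y^2 - gg \<alpha> \<beta> X}"
  define S where "S = {(x,y). x < l \<and> y < l \<and> int l dvd weq W (int x) (int y)}"
  define \<phi> where "\<phi> = (\<lambda>(x::nat,y::nat). ((4*int x - F1) mod L, (8*int y + 4*a1 W*int x + 4*a3 W) mod L))"
  have cm: "card C0 mod 4 = 3 \<and> int (card C0) \<le> 2 * L"
    unfolding C0_def using count_main[OF Lp, of \<alpha> \<beta>] a b ab unfolding \<alpha>_def \<beta>_def L_def by auto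
  have key: "L dvd weq W (int x) (int y) \<longleftrightarrow> L dvd (snd (\<phi> (x,y)))^2 - gg \<alpha> \<beta> (fst (\<phi> (x,y)))" for x y
  proof -
    obtain k1 where k1: "fst (\<phi> (x,y)) = 4*int x - F1 + k1 * L"
      using dvd_eqE[OF mod_dvd[of L "4*int x - F1"]] unfolding \<phi>_def by auto
    obtain k2 where k2: "snd (\<phi> (x,y)) = 8*int y + 4*a1 W*int x + 4*a3 W + k2 * L"
      using dvd_eqE[OF mod_dvd[of L "8*int y + 4*a1 W*int x + 4*a3 W"]] unfolding \<phi>_def by auto
    have h: "64 * weq W (int x) (int y) = (8*int y + 4*a1 W*int x + 4*a3 W)^2 - (4*int x - F1)*(4*int x-F2)*(4*int x-F3)"
      using hw .
    define X0 where "X0 = 4*int x - F1"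
    define Y0 where "Y0 = 8*int y + 4*a1 W*int x + 4*a3 W"
    define X where "X = fst (\<phi> (x,y))"
    define Y where "Y = snd (\<phi> (x,y))"
    define ww where "ww = weq W (int x) (int y)"
    have k1': "X = X0 + k1 * L" using k1 unfolding X_def X0_def .
    have k2': "Y = Y0 + k2 * L" using k2 unfolding Y_def Y0_def .
    have h': "64 * ww = Y0^2 - X0*(X0 - (F2 - F1))*(X0 - (F3 - F1))"
      using h unfolding ww_def X0_def Y0_def by (simp add: algebra_simps)
    have "Y^2 - X*(X - (F2 - F1))*(X - (F3 - F1)) = 64 * ww +
       (k2*(2*Y0 + k2*L) - k1*(3*X0^2 + 3*X0*k1*L + k1^2*L^2 - ((F2-F1)+(F3-F1))*(2*X0 + k1*L) + (F2-F1)*(F3-F1))) * L"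
      using k1' k2' h' by algebra
    then have "\<exists>m. (snd (\<phi> (x,y)))^2 - gg \<alpha> \<beta> (fst (\<phi> (x,y))) = 64 * weq W (int x) (int y) + m * L"
      unfolding gg_def \<alpha>_def \<beta>_def X_def Y_def ww_def by blast
    then have "L dvd ((snd (\<phi> (x,y)))^2 - gg \<alpha> \<beta> (fst (\<phi> (x,y)))) - 64 * weq W (int x) (int y)"
      by (rule eq_dvdI)
    then show ?thesis using dvd_sub_iff dvd64[OF Lp] by blast
  qed
  let ?U = "{..<l} \<times> {..<l}"
  let ?T = "{0..<L} \<times> {0..<L}"
  have inj: "inj_on \<phi> ?U"
  proof (rule inj_onI)
    fix z z' assume z: "z \<in> ?U" "z' \<in> ?U" and e: "\<phi> z = \<phi> z'"
    obtain x y where zz: "z = (x,y)" by (cases z)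
    obtain x' y' where zz': "z' = (x',y')" by (cases z')
    have e1: "(4*int x - F1) mod L = (4*int x' - F1) mod L" and
         e2: "(8*int y + 4*a1 W*int x + 4*a3 W) mod L = (8*int y' + 4*a1 W*int x' + 4*a3 W) mod L"
      using e unfolding zz zz' \<phi>_def by auto
    have "L dvd (4*int x - F1) - (4*int x' - F1)" using e1 by (simp add: mod_eq_dvd_iff)
    moreover have "(4*int x - F1) - (4*int x' - F1) = 4 * (int x - int x')" by simp
    ultimately have "L dvd 4 * (int x - int x')" by simp
    then have "L dvd 16 * (4 * (int x - int x'))" by (rule dvd_mult)
    then have "L dvd 64 * (int x - int x')" by simp
    then have "L dvd int x - int x'" using dvd64[OF Lp] by blast
    then have xx: "x = x'" using mod_eqI[of "int x" L "int x'"] z unfolding zz zz' L_def by auto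
    have hy: "L dvd (8*int y + 4*a1 W*int x + 4*a3 W) - (8*int y' + 4*a1 W*int x' + 4*a3 W)"
      using e2 by (simp only: mod_eq_dvd_iff)
    have eqy: "(8*int y + 4*a1 W*int x + 4*a3 W) - (8*int y' + 4*a1 W*int x' + 4*a3 W) = 8 * (int y - int y')"
      using xx by simp
    have "L dvd 8 * (int y - int y')" using hy unfolding eqy .
    then have "L dvd 8 * (8 * (int y - int y'))" by (rule dvd_mult)
    then have "L dvd 64 * (int y - int y')" by simp
    then have "L dvd int y - int y'" using dvd64[OF Lp] by blast
    then have "y = y'" using mod_eqI[of "int y" L "int y'"] z unfolding zz zz' L_def by auto
    then show "z = z'" using xx zz zz' by simp
  qed
  have sub: "\<phi> ` ?U \<subseteq> ?T" unfolding \<phi>_def using L0 by auto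
  have cU: "card (\<phi> ` ?U) = card ?T"
    using card_image[OF inj] L0 unfolding L_def by (simp add: card_cartesian_product)
  have full: "\<phi> ` ?U = ?T" using card_subset_eq[OF _ sub cU] by simp
  have SU: "S \<subseteq> ?U" unfolding S_def by auto
  have img: "\<phi> ` S = C0"
  proof
    show "\<phi> ` S \<subseteq> C0"
    proof
      fix z assume "z \<in> \<phi> ` S"
      then obtain x y where xy: "(x,y) \<in> S" "z = \<phi> (x,y)" by auto
      have "z \<in> ?T" using xy SU sub by blast
      moreover have "L dvd (snd z)^2 - gg \<alpha> \<beta> (fst z)"
      proof -
        have "int l dvd weq W (int x) (int y)" using xy(1) unfolding S_def by simp
        then show ?thesis using key[of x y] xy(2) unfolding L_def by simp
      qed
      ultimately show "z \<in> C0" unfolding C0_def by (cases z) auto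
    qed
    show "C0 \<subseteq> \<phi> ` S"
    proof
      fix z assume zC: "z \<in> C0"
      then have "z \<in> ?T" unfolding C0_def by auto
      then obtain w where w: "w \<in> ?U" "z = \<phi> w" using full by (metis imageE)
      obtain x y where wxy: "w = (x,y)" by (cases w)
      have "L dvd (snd z)^2 - gg \<alpha> \<beta> (fst z)" using zC unfolding C0_def by auto
      then have "L dvd weq W (int x) (int y)" using key[of x y] w wxy by simp
      moreover have "x < l" "y < l" using w wxy by auto
      ultimately have "(x,y) \<in> S" unfolding S_def L_def by simp
      then show "z \<in> \<phi> ` S" using w wxy by auto
    qed
  qed
  have cS: "card S = card C0" using card_image[OF inj_on_subset[OF inj SU]] img by simp
  show ?thesis using cm cS unfolding S_def L_def by auto
qed



lemma weq_id:
  fixes W :: "int wmodel" and F1 F2 F3 x y :: int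
  assumes V1: "a1 W^2 + 4*a2 W = -(F1+F2+F3)"
    and V2: "8*(2*a4 W + a1 W*a3 W) = F1*F2+F1*F3+F2*F3"
    and V3: "16*(a3 W^2 + 4*a6 W) = -(F1*F2*F3)"
  shows "64 * weq W x y = (8*y + 4*a1 W*x + 4*a3 W)^2 - (4*x - F1)*(4*x-F2)*(4*x-F3)"
  using V1 V2 V3 unfolding weq_def by algebra

lemma two_bad:
  fixes W :: "int wmodel" and F1 F2 F3 C p q :: int
  assumes p: "odd p" and q: "odd q"
    and V1: "a1 W^2 + 4*a2 W = -(F1+F2+F3)"
    and V2: "8*(2*a4 W + a1 W*a3 W) = F1*F2+F1*F3+F2*F3"
    and V3: "16*(a3 W^2 + 4*a6 W) = -(F1*F2*F3)"
    and F2: "F2 = F1 - C*p" and F3: "F3 = F1 - C*q"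
    and disc: "64 * wdisc W = C^6 * p^2 * q^2"
    and od: "odd (wdisc W)"
  shows False
proof -
  have Ce: "even C"
  proof (rule ccontr)
    assume "odd C"
    then have "odd (C^6 * p^2 * q^2)" using p q by simp
    then show False using disc by (metis even_mult_iff even_numeral)
  qed
  then obtain c where c: "C = 2*c" by (rule evenE)
  have "64 * wdisc W = 64 * (c^6 * p^2 * q^2)" using disc unfolding c by (simp add: power_mult_distrib)
  then have dW: "wdisc W = c^6 * p^2 * q^2" by simp
  have co: "odd c" using od dW by auto
  have F1e: "even F1"
  proof (rule ccontr)
    assume o: "odd F1"
    have "odd (F1*F2*F3)" unfolding F2 F3 c using o by simp
    moreover have "even (F1*F2*F3)"
    proof -
      have "F1*F2*F3 = 2 * (-8*(a3 W^2 + 4*a6 W))" using V3 by simp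
      then show ?thesis by simp
    qed
    ultimately show False by simp
  qed
  then obtain g where g: "F1 = 2*g" by (rule evenE)
  have V2': "2*(2*a4 W + a1 W*a3 W) = g*(g-c*p) + g*(g-c*q) + (g-c*p)*(g-c*q)"
  proof -
    have "4 * (2*(2*a4 W + a1 W*a3 W)) = 4 * (g*(g-c*p) + g*(g-c*q) + (g-c*p)*(g-c*q))"
      using V2 unfolding F2 F3 c g by algebra
    then show ?thesis by simp
  qed
  have V3': "2*(a3 W^2 + 4*a6 W) = -(g*(g-c*p)*(g-c*q))"
  proof -
    have "8 * (2*(a3 W^2 + 4*a6 W)) = 8 * (-(g*(g-c*p)*(g-c*q)))"
      using V3 unfolding F2 F3 c g by algebra
    then show ?thesis by simp
  qed
  show False
  proof (cases "even g")
    case True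
    have "odd (g*(g-c*p) + g*(g-c*q) + (g-c*p)*(g-c*q))" using True co p q by simp
    then show False using V2' by (metis even_mult_iff even_numeral)
  next
    case False
    have "even (g - c*p)" using False co p by simp
    then obtain h1 where h1: "g - c*p = 2*h1" by (rule evenE)
    have "even (g - c*q)" using False co q by simp
    then obtain h2 where h2: "g - c*q = 2*h2" by (rule evenE)
    have "2*(a3 W^2 + 4*a6 W) = 2*(-(2*(g*h1*h2)))" using V3' unfolding h1 h2 by simp
    then have "a3 W^2 = 2*(-(g*h1*h2) - 2*a6 W)" by simp
    then have e3: "even (a3 W)" by (metis dvd_triv_left even_power zero_less_numeral)
    have "a1 W^2 = 2*(-(g + (g - c*p) + (g - c*q)) - 2*a2 W)" using V1 unfolding F2 F3 g c by simp
    then have e1: "even (a1 W)" by (metis dvd_triv_left even_power zero_less_numeral)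
    have "even (wdisc W)" using e1 e3 unfolding wdisc_def Let_def by simp
    then show False using od by simp
  qed
qed



theorem proposition2p4:
  fixes p q :: nat and \<epsilon> :: int and S :: "nat set" and D :: nat
  assumes "prime p" "prime q" "odd p" "odd q" "q - p = 2"
    and "\<epsilon> \<in> {1, -1}"
    and "finite S" "\<forall>r\<in>S. prime r \<and> odd r" "D = \<Prod>S"
    and "gcd (p * q) D = 1"
  shows "Anom (E_ab (of_int (\<epsilon> * int p * int D)) (of_int (\<epsilon> * int q * int D))) = {}"
proof -
  define A where "A = \<epsilon> * int p * int D"
  define B where "B = \<epsilon> * int q * int D"
  have "\<forall>r\<in>S. r > 0" using assms(8) prime_gt_0_nat by blast
  then have Dpos: "D > 0" unfolding assms(9) using prod_pos[of S "\<lambda>x. x"] by blast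
  have e0: "\<epsilon> \<noteq> 0" using assms(6) by auto
  have qp: "int q = int p + 2" using assms(5) by linarith
  have p0: "int p \<noteq> 0" using assms(1) by auto
  have cpq: "coprime (int p) (int q)"
  proof -
    have "p \<noteq> q" using assms(5) by auto
    then have "coprime p q" using assms(1,2) primes_coprime by blast
    then show ?thesis by simp
  qed
  have po: "odd (int p)" "odd (int q)" using assms(3,4) by auto
  have "\<not> anomalous (E_ab (of_int A) (of_int B)) l" for l
  proof
    assume an: "anomalous (E_ab (of_int A) (of_int B)) l"
    then have lp: "prime l" unfolding anomalous_def by simp
    obtain W where W: "wiso (E_ab (of_int A) (of_int B)) (map_wmodel of_int W)"
      "\<not> int l dvd wdisc W" "l dvd npoints_mod W l"
      using an unfolding anomalous_def by blast
    obtain F1 F2 F3 where V1: "a1 W^2 + 4*a2 W = -(F1+F2+F3)"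
      and V2: "8*(2*a4 W + a1 W*a3 W) = F1*F2+F1*F3+F2*F3"
      and V3: "16*(a3 W^2 + 4*a6 W) = -(F1*F2*F3)" and V4: "(F1 - F2)*B = (F1 - F3)*A"
      using wiso_extract[OF W(1)] by blast
    have "((F1 - F2)*int q) * (\<epsilon> * int D) = ((F1 - F3)*int p) * (\<epsilon> * int D)"
      using V4 unfolding A_def B_def by (simp add: algebra_simps)
    then have V5: "(F1 - F2)*int q = (F1 - F3)*int p" using e0 Dpos by simp
    have "int p dvd (F1 - F2) * int q" using V5 by simp
    then have "int p dvd F1 - F2" using cpq coprime_dvd_mult_left_iff by blast
    then obtain C where C: "F1 - F2 = int p * C" by (rule dvdE)
    have "int p * (C * int q) = int p * (F1 - F3)" using V5 C by (simp add: algebra_simps)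
    then have C2: "F1 - F3 = C * int q" using p0 by simp
    have F2: "F2 = F1 - C * int p" using C by (simp add: algebra_simps)
    have F3: "F3 = F1 - C * int q" using C2 by (simp add: algebra_simps)
    have "256 * wdisc W = ((F1-F2)*(F1-F3)*(F2-F3))^2" using disc_id[OF V1 V2 V3] .
    moreover have dd: "(F1-F2)*(F1-F3)*(F2-F3) = 2 * C^3 * int p * int q" unfolding F2 F3 qp by algebra
    moreover have "((F1-F2)*(F1-F3)*(F2-F3))^2 = 4 * (C^6 * int p^2 * int q^2)" unfolding dd by algebra
    ultimately have "256 * wdisc W = 4 * (C^6 * int p^2 * int q^2)" by simp
    then have disc: "64 * wdisc W = C^6 * int p^2 * int q^2" by simp
    show False
    proof (cases "l = 2")
      case True
      have "odd (wdisc W)" using W(2) True by simp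
      then show False using two_bad[OF po V1 V2 V3 F2 F3 disc] by blast
    next
      case False
      have "l \<ge> 2" using lp prime_ge_2_nat by blast
      then have l3: "l \<ge> 3" using False by simp
      have ol: "odd l" using prime_odd_nat[OF lp] l3 by simp
      have L: "prime (int l)" "odd (int l)" using lp ol by auto
      have nd: "\<not> int l dvd z" if "z dvd C^6 * int p^2 * int q^2" for z
      proof
        assume "int l dvd z"
        then have "int l dvd C^6 * int p^2 * int q^2" using that by (rule dvd_trans)
        then have "int l dvd 64 * wdisc W" unfolding disc .
        then show False using dvd64[OF L] W(2) by blast
      qed
      have nC: "\<not> int l dvd C" by (rule nd) (simp add: power2_eq_square)
      have np: "\<not> int l dvd int p" by (rule nd) (simp add: power2_eq_square)
      have nq: "\<not> int l dvd int q" by (rule nd) (simp add: power2_eq_square)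
      have n2: "\<not> int l dvd 2"
      proof
        assume h: "int l dvd 2"
        have "int l \<le> 2" using zdvd_imp_le[OF h] by simp
        then show False using l3 by simp
      qed
      have "F2 - F1 = (-1) * (C * int p)" unfolding F2 by simp
      then have a: "\<not> int l dvd F2 - F1" using nC np L(1) by (simp add: prime_dvd_mult_iff)
      have "F3 - F1 = (-1) * (C * int q)" unfolding F3 by simp
      then have b: "\<not> int l dvd F3 - F1" using nC nq L(1) by (simp add: prime_dvd_mult_iff)
      have "(F2 - F1) - (F3 - F1) = 2 * C" unfolding F2 F3 qp by (simp add: algebra_simps)
      then have ab: "\<not> int l dvd (F2 - F1) - (F3 - F1)" using nC n2 L(1) by (simp add: prime_dvd_mult_iff)
      have hw: "\<And>x y. 64 * weq W x y = (8*y + 4*a1 W*x + 4*a3 W)^2 - (4*x - F1)*(4*x-F2)*(4*x-F3)"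
        using weq_id[OF V1 V2 V3] by blast
      have cw: "card {(x,y). x < l \<and> y < l \<and> int l dvd weq W (int x) (int y)} mod 4 = 3
       \<and> card {(x,y). x < l \<and> y < l \<and> int l dvd weq W (int x) (int y)} \<le> 2*l"
        using count_W[OF L hw a b ab] .
      define N where "N = npoints_mod W l"
      define K where "K = card {(x,y). x < l \<and> y < l \<and> int l dvd weq W (int x) (int y)}"
      have NK: "N = K + 1" unfolding N_def K_def npoints_mod_def by simp
      have K: "K mod 4 = 3" "K \<le> 2*l" using cw unfolding K_def by auto
      have N1: "N mod 4 = 0" "N \<le> 2*l + 1" using K NK by presburger+
      obtain k where k: "N = l * k" using W(3) unfolding N_def by (rule dvdE)
      have "k \<noteq> 0" using k NK by (metis mult_0_right add_is_0 one_neq_zero)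
      moreover have "k < 3"
      proof (rule ccontr)
        assume "\<not> k < 3"
        then have "l * 3 \<le> l * k" by simp
        then show False using k N1 l3 by linarith
      qed
      ultimately have "k = 1 \<or> k = 2" by auto
      then show False using k N1 ol by auto
    qed
  qed
  then show ?thesis unfolding Anom_def A_def B_def by auto
qed

end
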